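(* Let $G$ and $H$ be connected graphs, each with at least two vertices, such that $\delta(H)>|V(H)|/2$. Let $S\subseteq E(G\times H)$. <ol> <li>If $|S|<\delta(G)\delta(H)$, then every $H$-fiber ${}_xH$ ($x\in V(G)$) is contained in a single connected component of $G\times H-S$.</li> <li>Assume it is not the case that $G\cong K_2$ and $H\cong\overline{K_{2l-1}}\vee lK_2$ for some integer $l\ge1$. Assume also that $|S|=\delta(G)\delta(H)$ and that $S$ is not the set of all edges incident with any single vertex of $G\times H$. Then every $H$-fiber ${}_xH$ is contained in a single connected component of $G\times H-S$.</li> </ol>
   Context: All graphs are finite, simple and undirected. $\delta(\cdot)$ denotes minimum degree. The direct product $G\times H$ has vertex set $V(G)\times V(H)$. Two vertices $(x,u),(y,v)$ are adjacent if and only if $xy\in E(G)$ and $uv\in E(H)$. For $x\in V(G)$, the $H$-fiber is ${}_xH=\{(x,u):u\in V(H)\}$. $\overline{K_{2l-1}}\vee lK_2$ is the join of an edgeless graph on $2l-1$ vertices with a perfect matching on $2l$ vertices. Equivalently, it is $K_{2l-1,2l}$ with $l$ pairwise disjoint edges added inside the part of size $2l$. *)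

theory Defs
  imports Complex_Main
begin

definition graph :: "'a set \<Rightarrow> 'a set set \<Rightarrow> bool" where
  "graph V E \<longleftrightarrow> finite V \<and> (\<forall>e\<in>E. \<exists>u v. e = {u, v} \<and> u \<noteq> v \<and> u \<in> V \<and> v \<in> V)"

definition degree :: "'a set \<Rightarrow> 'a set set \<Rightarrow> 'a \<Rightarrow> nat" where
  "degree V E v = card {u \<in> V. {u, v} \<in> E}"

definition min_degree :: "'a set \<Rightarrow> 'a set set \<Rightarrow> nat" where
  "min_degree V E = Min (degree V E ` V)"

definition reachable :: "'a set set \<Rightarrow> 'a \<Rightarrow> 'a \<Rightarrow> bool" where
  "reachable E = (\<lambda>a b. {a, b} \<in> E)\<^sup>*\<^sup>*"

definition connected :: "'a set \<Rightarrow> 'a set set \<Rightarrow> bool" where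
  "connected V E \<longleftrightarrow> V \<noteq> {} \<and> (\<forall>u\<in>V. \<forall>v\<in>V. reachable E u v)"

definition dprod_V :: "'a set \<Rightarrow> 'b set \<Rightarrow> ('a \<times> 'b) set" where
  "dprod_V VG VH = VG \<times> VH"

definition dprod_E :: "'a set set \<Rightarrow> 'b set set \<Rightarrow> ('a \<times> 'b) set set" where
  "dprod_E EG EH = {{(x, u), (y, v)} | x y u v. {x, y} \<in> EG \<and> {u, v} \<in> EH}"

definition graph_iso :: "'a set \<Rightarrow> 'a set set \<Rightarrow> 'b set \<Rightarrow> 'b set set \<Rightarrow> bool" where
  "graph_iso V E V' E' \<longleftrightarrow> (\<exists>f. bij_betw f V V' \<and>
      (\<forall>u\<in>V. \<forall>v\<in>V. {u, v} \<in> E \<longleftrightarrow> {f u, f v} \<in> E'))"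

definition K2_V :: "nat set" where "K2_V = {0, 1}"
definition K2_E :: "nat set set" where "K2_E = {{0, 1}}"

text \<open>The join of the edgeless graph on vertices 0..2l-2 with the perfect matching
  on vertices 2l-1..4l-2, matching 2l-1+2i with 2l+2i for i < l.\<close>
definition join_V :: "nat \<Rightarrow> nat set" where
  "join_V l = {0..<4*l - 1}"

definition join_E :: "nat \<Rightarrow> nat set set" where
  "join_E l = {{a, b} | a b. a < 2*l - 1 \<and> 2*l - 1 \<le> b \<and> b < 4*l - 1}
            \<union> {{2*l - 1 + 2*i, 2*l + 2*i} | i. i < l}"

definition incident_edges :: "'a set set \<Rightarrow> 'a \<Rightarrow> 'a set set" where
  "incident_edges E w = {e \<in> E. w \<in> e}"

end

theory Submission
  imports Defs
begin


lemma arith_ge: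
  fixes n d x k e1 e2 :: nat
  assumes h: "n < 2*d" "d+1 \<le> n" "1 \<le> x" "x+1 \<le> n" "k \<le> n"
  and b1: "x*(d-k) \<le> e1" and b2: "(n-k)*(d-(n-x)) \<le> e1"
  and b3: "(n-x)*(d-(n-k)) \<le> e2" and b4: "k*(d-x) \<le> e2"
  shows "d \<le> e1+e2"
    and "e1 + e2 = d \<Longrightarrow> 1 \<le> k \<Longrightarrow> k+1 \<le> n \<Longrightarrow>
          d = 2 \<or> (k = d \<and> x+1 = d \<and> e1 = 0 \<and> e2 = k) \<or> (n-k = d \<and> n-x+1 = d \<and> e2 = 0 \<and> e1 = n-k)"
    and "e1 + e2 = d \<Longrightarrow> k = 0 \<Longrightarrow> x = 1"
    and "e1 + e2 = d \<Longrightarrow> k = n \<Longrightarrow> n - x = 1"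
proof -
  have d2: "d \<ge> 2" using h by linarith
  have main: "d \<le> e1+e2 \<and> (e1 + e2 = d \<longrightarrow> 1 \<le> k \<longrightarrow> k+1 \<le> n \<longrightarrow>
          d = 2 \<or> (k = d \<and> x+1 = d \<and> e1 = 0 \<and> e2 = k) \<or> (n-k = d \<and> n-x+1 = d \<and> e2 = 0 \<and> e1 = n-k))"
  proof (cases "d \<le> k")
    case dk: True
    show ?thesis
    proof (cases "x < d")
      case True
      then obtain t where t: "d - x = Suc t" by (metis Suc_diff_Suc)
      have "k*(d-x) = k + k*t" using t by simp
      hence e2: "k + k*t \<le> e2" using b4 by simp
      have "d \<le> e1+e2" using e2 dk by linarith
      moreover have "e1+e2 = d \<longrightarrow> (k = d \<and> x+1 = d \<and> e1 = 0 \<and> e2 = k)"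
      proof
        assume eq: "e1+e2 = d"
        have "k*t = 0" using e2 eq dk by linarith
        hence "t = 0" using dk d2 by simp
        thus "k = d \<and> x+1 = d \<and> e1 = 0 \<and> e2 = k" using t e2 eq dk by auto
      qed
      ultimately show ?thesis by blast
    next
      case False
      define P where "P = int (n-k)"
      define Q where "Q = int (n-x)"
      define D where "D = int d"
      have PQ: "0 \<le> P" "1 \<le> Q" "P \<le> D - 1" "Q \<le> D - 1" using h dk False unfolding P_def Q_def D_def by auto
      have "int ((n-k)*(d-(n-x))) = P*(D-Q)" using h False unfolding P_def Q_def D_def by (simp add: of_nat_diff)
      moreover have "int ((n-x)*(d-(n-k))) = Q*(D-P)" using h dk unfolding P_def Q_def D_def by (simp add: of_nat_diff)
      ultimately have bb: "P*(D-Q) + Q*(D-P) \<le> int e1 + int e2" using b2 b3 by linarith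
      have id: "P*(D-Q) + Q*(D-P) = D + P*(D-Q-1) + (Q-1)*(D-P)" by (simp add: algebra_simps)
      have n1: "0 \<le> P*(D-Q-1)" "0 \<le> (Q-1)*(D-P)" using PQ by auto
      have "d \<le> e1+e2" using bb id n1 unfolding D_def by linarith
      moreover have "e1 + e2 = d \<longrightarrow> 1 \<le> k \<longrightarrow> k+1 \<le> n \<longrightarrow> d = 2"
      proof (intro impI)
        assume eq: "e1+e2 = d" and "1 \<le> k" "k+1 \<le> n"
        hence P1: "1 \<le> P" unfolding P_def by auto
        have z: "P*(D-Q-1) = 0" "(Q-1)*(D-P) = 0" using bb id n1 eq unfolding D_def by linarith+
        have "D - Q - 1 = 0" using z(1) P1 by simp
        moreover have "Q - 1 = 0" using z(2) PQ by simp
        ultimately show "d = 2" unfolding D_def by linarith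
      qed
      ultimately show ?thesis by blast
    qed
  next
    case nk: False
    show ?thesis
    proof (cases "k + d \<le> n")
      case kd: True
      show ?thesis
      proof (cases "n - x < d")
        case True
        then obtain t where t: "d - (n-x) = Suc t" by (metis Suc_diff_Suc)
        have "(n-k)*(d-(n-x)) = (n-k) + (n-k)*t" using t by simp
        hence e1: "(n-k) + (n-k)*t \<le> e1" using b2 by simp
        have "d \<le> e1+e2" using e1 kd by linarith
        moreover have "e1+e2 = d \<longrightarrow> (n-k = d \<and> n-x+1 = d \<and> e2 = 0 \<and> e1 = n-k)"
        proof
          assume eq: "e1+e2 = d"
          have "(n-k)*t = 0" using e1 eq kd by linarith
          hence "t = 0" using kd d2 by simp
          thus "n-k = d \<and> n-x+1 = d \<and> e2 = 0 \<and> e1 = n-k" using t e1 eq kd by auto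
        qed
        ultimately show ?thesis by blast
      next
        case False
        define P where "P = int k"
        define Q where "Q = int x"
        define D where "D = int d"
        have PQ: "0 \<le> P" "1 \<le> Q" "P \<le> D - 1" "Q \<le> D - 1" using h kd False unfolding P_def Q_def D_def by auto
        have "int (x*(d-k)) = Q*(D-P)" using h kd unfolding P_def Q_def D_def by (simp add: of_nat_diff)
        moreover have "int (k*(d-x)) = P*(D-Q)" using h False unfolding P_def Q_def D_def by (simp add: of_nat_diff)
        ultimately have bb: "P*(D-Q) + Q*(D-P) \<le> int e1 + int e2" using b1 b4 by linarith
        have id: "P*(D-Q) + Q*(D-P) = D + P*(D-Q-1) + (Q-1)*(D-P)" by (simp add: algebra_simps)
        have n1: "0 \<le> P*(D-Q-1)" "0 \<le> (Q-1)*(D-P)" using PQ by auto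
        have "d \<le> e1+e2" using bb id n1 unfolding D_def by linarith
        moreover have "e1 + e2 = d \<longrightarrow> 1 \<le> k \<longrightarrow> k+1 \<le> n \<longrightarrow> d = 2"
        proof (intro impI)
          assume eq: "e1+e2 = d" and "1 \<le> k" "k+1 \<le> n"
          hence P1: "1 \<le> P" unfolding P_def by auto
          have z: "P*(D-Q-1) = 0" "(Q-1)*(D-P) = 0" using bb id n1 eq unfolding D_def by linarith+
          have "D - Q - 1 = 0" using z(1) P1 by simp
          moreover have "Q - 1 = 0" using z(2) PQ by simp
          ultimately show "d = 2" unfolding D_def by linarith
        qed
        ultimately show ?thesis by blast
      qed
    next
      case kd: False
      define X where "X = int x"
      define N where "N = int n"
      define D where "D = int d"
      define K where "K = int k"
      have al: "1 \<le> D - K" "1 \<le> D - N + K" "1 \<le> X" "X + 1 \<le> N"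
        using nk kd h unfolding X_def N_def D_def K_def by auto
      have "int (x*(d-k)) = X*(D-K)" using nk unfolding X_def D_def K_def by (simp add: of_nat_diff)
      moreover have "int ((n-x)*(d-(n-k))) = (N-X)*(D-N+K)" using kd h unfolding X_def N_def D_def K_def by (simp add: of_nat_diff)
      ultimately have bb: "X*(D-K) + (N-X)*(D-N+K) \<le> int e1 + int e2" using b1 b3 by linarith
      have id: "X*(D-K) + (N-X)*(D-N+K) = 2*D - 2 + (X-1)*(D-K-1) + (N-X-1)*(D-N+K-1)"
        by (simp add: algebra_simps)
      have n1: "0 \<le> (X-1)*(D-K-1)" "0 \<le> (N-X-1)*(D-N+K-1)" using al by auto
      have dd: "2 \<le> D" using d2 unfolding D_def by simp
      have "d \<le> e1+e2" using bb id n1 dd unfolding D_def by linarith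
      moreover have "e1 + e2 = d \<longrightarrow> d = 2"
        using bb id n1 dd unfolding D_def by linarith
      ultimately show ?thesis by blast
    qed
  qed
  thus "d \<le> e1+e2" by blast
  show "e1 + e2 = d \<Longrightarrow> 1 \<le> k \<Longrightarrow> k+1 \<le> n \<Longrightarrow>
          d = 2 \<or> (k = d \<and> x+1 = d \<and> e1 = 0 \<and> e2 = k) \<or> (n-k = d \<and> n-x+1 = d \<and> e2 = 0 \<and> e1 = n-k)"
    using main by blast
  show "e1 + e2 = d \<Longrightarrow> k = 0 \<Longrightarrow> x = 1"
  proof -
    assume "e1+e2 = d" "k = 0"
    hence "x*d \<le> e1" using b1 by simp
    hence xd: "x*d \<le> d" using \<open>e1+e2 = d\<close> by linarith
    have "x \<le> 1"
    proof (rule ccontr)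
      assume "\<not> x \<le> 1" hence "2*d \<le> x*d" by (intro mult_le_mono1) simp
      thus False using xd d2 by linarith
    qed
    thus "x = 1" using h by simp
  qed
  show "e1 + e2 = d \<Longrightarrow> k = n \<Longrightarrow> n - x = 1"
  proof -
    assume "e1+e2 = d" "k = n"
    hence "(n-x)*d \<le> e2" using b3 by simp
    hence xd: "(n-x)*d \<le> d" using \<open>e1+e2 = d\<close> by linarith
    have "n-x \<le> 1"
    proof (rule ccontr)
      assume "\<not> n-x \<le> 1" hence "2*d \<le> (n-x)*d" by (intro mult_le_mono1) simp
      thus False using xd d2 by linarith
    qed
    thus "n - x = 1" using h by simp
  qed
qed


lemma pairing:
  assumes "finite Y" and "\<forall>b\<in>Y. \<sigma> b \<in> Y \<and> \<sigma> b \<noteq> b \<and> \<sigma> (\<sigma> b) = b"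
  shows "\<exists>h. bij_betw h Y {0..<card Y} \<and> even (card Y) \<and>
     (\<forall>b\<in>Y. h (\<sigma> b) = (if even (h b) then h b + 1 else h b - 1))"
  using assms
proof (induction "card Y" arbitrary: Y rule: less_induct)
  case less
  show ?case
  proof (cases "Y = {}")
    case True thus ?thesis by (auto simp: bij_betw_def)
  next
    case False
    then obtain b where b: "b \<in> Y" by blast
    define Y' where "Y' = Y - {b, \<sigma> b}"
    have sb: "\<sigma> b \<in> Y" "\<sigma> b \<noteq> b" "\<sigma> (\<sigma> b) = b" using less.prems b by auto
    have "card {b, \<sigma> b} \<le> card Y" using less.prems(1) b sb by (intro card_mono) auto
    hence c2: "2 \<le> card Y" using sb by simp
    have cY: "card Y = card Y' + 2" unfolding Y'_def using less.prems(1) b sb c2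
      by (simp add: card_Diff_subset)
    have fY': "finite Y'" unfolding Y'_def using less.prems(1) by simp
    have cl: "\<forall>c\<in>Y'. \<sigma> c \<in> Y' \<and> \<sigma> c \<noteq> c \<and> \<sigma> (\<sigma> c) = c"
      unfolding Y'_def using less.prems(2) sb by auto
    obtain h' where h': "bij_betw h' Y' {0..<card Y'}" "even (card Y')"
      "\<forall>c\<in>Y'. h' (\<sigma> c) = (if even (h' c) then h' c + 1 else h' c - 1)"
      using less.hyps[of Y'] cY fY' cl by auto
    define m where "m = card Y'"
    define h where "h c = (if c = b then m else if c = \<sigma> b then m + 1 else h' c)" for c
    have "bij_betw h Y' {0..<m}"
      using h'(1) unfolding h_def m_def Y'_def by (rule bij_betw_cong[THEN iffD1, rotated]) auto
    moreover have "bij_betw h {b, \<sigma> b} {m, m+1}"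
      using sb unfolding h_def bij_betw_def by auto
    ultimately have "bij_betw h (Y' \<union> {b, \<sigma> b}) ({0..<m} \<union> {m, m+1})"
      by (rule bij_betw_combine) auto
    moreover have "Y' \<union> {b, \<sigma> b} = Y" unfolding Y'_def using b sb by auto
    moreover have "{0..<m} \<union> {m, m+1} = {0..<card Y}" using cY unfolding m_def by auto
    ultimately have bij: "bij_betw h Y {0..<card Y}" by simp
    have ev: "even (card Y)" using cY h'(2) by simp
    have "\<forall>c\<in>Y. h (\<sigma> c) = (if even (h c) then h c + 1 else h c - 1)"
    proof
      fix c assume c: "c \<in> Y"
      show "h (\<sigma> c) = (if even (h c) then h c + 1 else h c - 1)"
      proof (cases "c = b \<or> c = \<sigma> b")
        case True thus ?thesis using sb h'(2) unfolding h_def m_def by auto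
      next
        case False
        hence "c \<in> Y'" unfolding Y'_def using c by auto
        moreover hence "\<sigma> c \<noteq> b \<and> \<sigma> c \<noteq> \<sigma> b" using cl unfolding Y'_def by auto
        ultimately show ?thesis using False h'(3) unfolding h_def by auto
      qed
    qed
    thus ?thesis using bij ev by blast
  qed
qed


lemma graph_noloop: "graph V E \<Longrightarrow> {a, a} \<notin> E"
  unfolding graph_def by (auto simp: doubleton_eq_iff)

lemma graph_edge: "graph V E \<Longrightarrow> {a, b} \<in> E \<Longrightarrow> a \<in> V \<and> b \<in> V"
  unfolding graph_def by (fastforce simp: doubleton_eq_iff)

lemma join_E_char:
  assumes "l \<ge> 1"
  shows "{p, q} \<in> join_E l \<longleftrightarrow> (p < 2*l-1 \<and> 2*l-1 \<le> q \<and> q < 4*l-1) \<or> (q < 2*l-1 \<and> 2*l-1 \<le> p \<and> p < 4*l-1)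
     \<or> (\<exists>i<l. (p = 2*l-1+2*i \<and> q = 2*l+2*i) \<or> (q = 2*l-1+2*i \<and> p = 2*l+2*i))"
  unfolding join_E_def by (auto simp: doubleton_eq_iff)

lemma join_iso:
  assumes gr: "graph V E" and XY: "X \<inter> Y = {}" "X \<union> Y = V"
    and XX: "\<forall>a\<in>X. \<forall>b\<in>X. {a,b} \<notin> E" and XYe: "\<forall>a\<in>X. \<forall>b\<in>Y. {a,b} \<in> E"
    and YY: "\<forall>b\<in>Y. card {c\<in>Y. {b,c}\<in>E} = 1" and cXY: "card X + 1 = card Y"
  shows "\<exists>l\<ge>1. graph_iso V E (join_V l) (join_E l)"
proof -
  have finV: "finite V" using gr unfolding graph_def by simp
  hence finX: "finite X" and finY: "finite Y" using XY by auto
  define \<sigma> where "\<sigma> b = (THE c. c\<in>Y \<and> {b,c}\<in>E)" for b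
  have sig: "\<sigma> b \<in> Y \<and> {b, \<sigma> b} \<in> E \<and> (\<forall>c. c\<in>Y \<and> {b,c}\<in>E \<longrightarrow> c = \<sigma> b)" if b: "b \<in> Y" for b
  proof -
    obtain c where c: "{c'\<in>Y. {b,c'}\<in>E} = {c}" using YY b by (metis card_1_singletonE)
    hence "\<sigma> b = c" unfolding \<sigma>_def by (intro the_equality) auto
    thus ?thesis using c by auto
  qed
  have sig2: "\<forall>b\<in>Y. \<sigma> b \<in> Y \<and> \<sigma> b \<noteq> b \<and> \<sigma> (\<sigma> b) = b"
  proof
    fix b assume b: "b \<in> Y"
    have "\<sigma> b \<noteq> b" using sig[OF b] graph_noloop[OF gr] by metis
    moreover have "\<sigma> (\<sigma> b) = b" using sig[OF b] sig[of "\<sigma> b"] b by (metis insert_commute)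
    ultimately show "\<sigma> b \<in> Y \<and> \<sigma> b \<noteq> b \<and> \<sigma> (\<sigma> b) = b" using sig[OF b] by blast
  qed
  obtain h where h: "bij_betw h Y {0..<card Y}" "even (card Y)"
    "\<forall>b\<in>Y. h (\<sigma> b) = (if even (h b) then h b + 1 else h b - 1)"
    using pairing[OF finY sig2] by blast
  obtain l where l: "card Y = 2*l" using h(2) by (auto elim: evenE)
  have l1: "l \<ge> 1" using l cXY by simp
  have cX: "card X = 2*l - 1" using l cXY by simp
  obtain g where g: "bij_betw g X {0..<card X}" using ex_bij_betw_finite_nat[OF finX] by blast
  define F where "F a = (if a \<in> X then g a else 2*l-1 + h a)" for a
  have b1': "bij_betw g X {0..<2*l-1}" using g cX by simp
  have b1: "bij_betw F X {0..<2*l-1}"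
    by (rule bij_betw_cong[THEN iffD1, OF _ b1']) (simp add: F_def)
  have "bij_betw ((+) (2*l-1)) {0..<2*l} {2*l-1..<4*l-1}"
    unfolding bij_betw_def
  proof
    show "inj_on ((+) (2*l-1)) {0..<2*l}" by simp
    show "(+) (2*l-1) ` {0..<2*l} = {2*l-1..<4*l-1}"
    proof (intro equalityI subsetI)
      fix x assume "x \<in> (+) (2*l-1) ` {0..<2*l}" thus "x \<in> {2*l-1..<4*l-1}" using l1 by auto
    next
      fix x assume x: "x \<in> {2*l-1..<4*l-1}"
      show "x \<in> (+) (2*l-1) ` {0..<2*l}" using l1 x by (intro image_eqI[of _ _ "x - (2*l-1)"]) auto
    qed
  qed
  hence b2': "bij_betw ((+) (2*l-1) \<circ> h) Y {2*l-1..<4*l-1}" using h(1) l by (auto intro: bij_betw_trans)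
  have b2: "bij_betw F Y {2*l-1..<4*l-1}"
    by (rule bij_betw_cong[THEN iffD1, OF _ b2']) (use XY(1) in \<open>auto simp: F_def\<close>)
  have "bij_betw F (X \<union> Y) ({0..<2*l-1} \<union> {2*l-1..<4*l-1})"
    using b1 b2 by (rule bij_betw_combine) auto
  moreover have "{0..<2*l-1} \<union> {2*l-1..<4*l-1} = join_V l" unfolding join_V_def using l1 by auto
  ultimately have bij: "bij_betw F V (join_V l)" using XY by simp
  have hlt: "h b < 2*l" if "b \<in> Y" for b using h(1) that l by (auto simp: bij_betw_def)
  have glt: "g a < 2*l-1" if "a \<in> X" for a using g that cX by (auto simp: bij_betw_def)
  have hinj: "inj_on h Y" using h(1) by (auto simp: bij_betw_def)
  have edges: "{u, v} \<in> E \<longleftrightarrow> {F u, F v} \<in> join_E l" if u: "u \<in> V" and v: "v \<in> V" for u v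
  proof -
    consider "u \<in> X" "v \<in> X" | "u \<in> X" "v \<in> Y" | "u \<in> Y" "v \<in> X" | "u \<in> Y" "v \<in> Y"
      using u v XY by blast
    thus ?thesis
    proof cases
      case 1
      thus ?thesis using XX glt[OF 1(1)] glt[OF 1(2)] unfolding F_def join_E_char[OF l1] by auto
    next
      case 2
      have "v \<notin> X" using 2 XY by auto
      thus ?thesis using XYe 2 glt[OF 2(1)] hlt[OF 2(2)] unfolding F_def join_E_char[OF l1] by auto
    next
      case 3
      have "u \<notin> X" using 3 XY by auto
      thus ?thesis using XYe 3 glt[OF 3(2)] hlt[OF 3(1)] unfolding F_def join_E_char[OF l1]
        by (auto simp: insert_commute)
    next
      case 4
      have nX: "u \<notin> X" "v \<notin> X" using 4 XY by auto
      have "{u, v} \<in> E \<longleftrightarrow> v = \<sigma> u" using sig[OF 4(1)] 4 by auto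
      also have "\<dots> \<longleftrightarrow> (\<exists>i<l. (h u = 2*i \<and> h v = 2*i+1) \<or> (h v = 2*i \<and> h u = 2*i+1))"
      proof
        assume "v = \<sigma> u"
        hence hv: "h v = (if even (h u) then h u + 1 else h u - 1)" using h(3) 4 by auto
        have "h u div 2 < l" using hlt[OF 4(1)] by simp
        thus "\<exists>i<l. (h u = 2*i \<and> h v = 2*i+1) \<or> (h v = 2*i \<and> h u = 2*i+1)"
          using hv by (intro exI[of _ "h u div 2"]) (auto elim!: evenE oddE)
      next
        assume "\<exists>i<l. (h u = 2*i \<and> h v = 2*i+1) \<or> (h v = 2*i \<and> h u = 2*i+1)"
        hence "h v = h (\<sigma> u)" using h(3) 4 by auto
        thus "v = \<sigma> u" using hinj 4 sig2 by (auto dest: inj_onD)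
      qed
      also have "\<dots> \<longleftrightarrow> {F u, F v} \<in> join_E l"
        using nX l1 unfolding F_def join_E_char[OF l1] by auto
      finally show ?thesis .
    qed
  qed
  show ?thesis using l1 bij edges unfolding graph_iso_def by blast
qed


definition nbr :: "'b set \<Rightarrow> 'b set set \<Rightarrow> 'b \<Rightarrow> 'b set" where
  "nbr V E a = {b\<in>V. {a,b}\<in>E}"
definition ecnt :: "'b set \<Rightarrow> 'b set set \<Rightarrow> 'b set \<Rightarrow> 'b set \<Rightarrow> nat" where
  "ecnt V E P Q = card {(a,b)\<in>V\<times>V. {a,b}\<in>E \<and> a\<in>P \<and> b\<in>Q}"
definition fcut :: "'b set \<Rightarrow> 'b set set \<Rightarrow> 'b set \<Rightarrow> 'b set \<Rightarrow> nat" where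
  "fcut V E X Y = card {(a,b)\<in>V\<times>V. {a,b}\<in>E \<and> (a\<in>X) \<noteq> (b\<in>Y)}"

lemma degree_nbr: "degree V E a = card (nbr V E a)"
  unfolding degree_def nbr_def by (simp add: insert_commute)

lemma ecnt_sum:
  assumes "finite V"
  shows "ecnt V E P Q = (\<Sum>a\<in>V\<inter>P. card (nbr V E a \<inter> Q))"
proof -
  have "{(a,b)\<in>V\<times>V. {a,b}\<in>E \<and> a\<in>P \<and> b\<in>Q} = Sigma (V\<inter>P) (\<lambda>a. nbr V E a \<inter> Q)"
    unfolding nbr_def by auto
  thus ?thesis unfolding ecnt_def using assms by (simp add: nbr_def)
qed

lemma ecnt_swap: "ecnt V E P Q = ecnt V E Q P"
proof -
  have "{(a,b)\<in>V\<times>V. {a,b}\<in>E \<and> a\<in>Q \<and> b\<in>P} = prod.swap ` {(a,b)\<in>V\<times>V. {a,b}\<in>E \<and> a\<in>P \<and> b\<in>Q}"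
    by (auto simp: insert_commute image_iff)
  thus ?thesis unfolding ecnt_def by (simp add: card_image)
qed

lemma ecnt_lb:
  assumes "finite V" and "\<forall>a\<in>V. d \<le> card (nbr V E a)"
  shows "card (V\<inter>P) * (d - card (V - Q)) \<le> ecnt V E P Q"
proof -
  have "card (nbr V E a \<inter> Q) \<ge> d - card (V - Q)" if a: "a \<in> V" for a
  proof -
    have "nbr V E a \<subseteq> (nbr V E a \<inter> Q) \<union> (V - Q)" unfolding nbr_def by auto
    hence "card (nbr V E a) \<le> card ((nbr V E a \<inter> Q) \<union> (V - Q))"
      using assms(1) by (intro card_mono) (auto simp: nbr_def)
    also have "\<dots> \<le> card (nbr V E a \<inter> Q) + card (V - Q)" by (rule card_Un_le)
    finally show ?thesis using assms(2) a by fastforce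
  qed
  hence "(\<Sum>a\<in>V\<inter>P. d - card (V - Q)) \<le> (\<Sum>a\<in>V\<inter>P. card (nbr V E a \<inter> Q))"
    by (intro sum_mono) auto
  thus ?thesis using ecnt_sum[OF assms(1)] by simp
qed

lemma fcut_split:
  assumes "finite V"
  shows "fcut V E X Y = ecnt V E X (V-Y) + ecnt V E (V-X) Y"
proof -
  have "{(a,b)\<in>V\<times>V. {a,b}\<in>E \<and> (a\<in>X) \<noteq> (b\<in>Y)} =
    {(a,b)\<in>V\<times>V. {a,b}\<in>E \<and> a\<in>X \<and> b\<in>V-Y} \<union> {(a,b)\<in>V\<times>V. {a,b}\<in>E \<and> a\<in>V-X \<and> b\<in>Y}" by auto
  moreover have "finite (V\<times>V)" using assms by simp
  ultimately show ?thesis unfolding fcut_def ecnt_def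
    by (subst card_Un_disjoint[symmetric]) (auto intro: finite_subset)
qed

lemma nbr_sub: "graph V E \<Longrightarrow> nbr V E a \<subseteq> V - {a}"
  unfolding nbr_def using graph_noloop by fastforce

locale hg =
  fixes V :: "'b set" and E :: "'b set set" and d :: nat
  assumes gr: "graph V E" and deg: "\<forall>a\<in>V. d \<le> card (nbr V E a)" and half: "card V < 2*d"
begin

lemma finV: "finite V" using gr unfolding graph_def by simp

lemma dn: "V \<noteq> {} \<Longrightarrow> d + 1 \<le> card V"
proof -
  assume "V \<noteq> {}" then obtain a where a: "a \<in> V" by blast
  have "card (nbr V E a) \<le> card (V - {a})" using nbr_sub[OF gr] finV by (intro card_mono) auto
  moreover have "card V > 0" using a finV card_gt_0_iff by auto
  ultimately show ?thesis using deg a finV by (auto simp: card_Diff_singleton)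
qed

lemma bounds:
  assumes X: "X \<subseteq> V" and Y: "Y \<subseteq> V"
  shows "card X * (d - card Y) \<le> ecnt V E X (V-Y)"
    "(card V - card Y) * (d - (card V - card X)) \<le> ecnt V E X (V-Y)"
    "(card V - card X) * (d - (card V - card Y)) \<le> ecnt V E (V-X) Y"
    "card Y * (d - card X) \<le> ecnt V E (V-X) Y"
proof -
  have c: "card (V - X) = card V - card X" "card (V - Y) = card V - card Y"
    using X Y finV by (auto simp: card_Diff_subset finite_subset)
  have d1: "V - (V - Y) = Y" "V - (V - X) = X" "V \<inter> X = X" "V \<inter> Y = Y" "V \<inter> (V - X) = V - X"
    "V \<inter> (V - Y) = V - Y" using X Y by auto
  show "card X * (d - card Y) \<le> ecnt V E X (V-Y)"
    using ecnt_lb[OF finV deg, of X "V-Y"] d1 by simp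
  show "(card V - card Y) * (d - (card V - card X)) \<le> ecnt V E X (V-Y)"
    using ecnt_lb[OF finV deg, of "V-Y" X] d1 c ecnt_swap[of V E X "V-Y"] by simp
  show "(card V - card X) * (d - (card V - card Y)) \<le> ecnt V E (V-X) Y"
    using ecnt_lb[OF finV deg, of "V-X" Y] d1 c by simp
  show "card Y * (d - card X) \<le> ecnt V E (V-X) Y"
    using ecnt_lb[OF finV deg, of Y "V-X"] d1 c ecnt_swap[of V E "V-X" Y] by simp
qed

lemma struct_join:
  assumes X: "X \<subseteq> V" and Y: "Y \<subseteq> V" and cY: "card Y = d" and cX: "card X + 1 = d"
    and e1: "ecnt V E X (V-Y) = 0" and e2: "ecnt V E (V-X) Y = card Y"
  shows "\<exists>l\<ge>1. graph_iso V E (join_V l) (join_E l)"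
proof -
  have finY: "finite Y" and finX: "finite X" using X Y finV by (auto intro: finite_subset)
  have nY: "nbr V E a = Y" if a: "a \<in> X" for a
  proof -
    have fin: "finite {(a,b)\<in>V\<times>V. {a,b}\<in>E \<and> a\<in>X \<and> b\<in>V-Y}" using finV by (auto intro: finite_subset)
    have "nbr V E a \<subseteq> Y"
    proof
      fix b assume b: "b \<in> nbr V E a"
      show "b \<in> Y"
      proof (rule ccontr)
        assume "b \<notin> Y"
        hence "(a,b) \<in> {(a,b)\<in>V\<times>V. {a,b}\<in>E \<and> a\<in>X \<and> b\<in>V-Y}" using b a X unfolding nbr_def by auto
        thus False using e1 fin unfolding ecnt_def by auto
      qed
    qed
    moreover have "card Y \<le> card (nbr V E a)" using deg a X cY by auto
    ultimately show ?thesis using finY by (metis card_seteq)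
  qed
  have disj: "X \<inter> Y = {}"
  proof (rule ccontr)
    assume "X \<inter> Y \<noteq> {}" then obtain a where "a \<in> X" "a \<in> Y" by blast
    hence "a \<in> nbr V E a" using nY by auto
    thus False using nbr_sub[OF gr] by auto
  qed
  have un: "X \<union> Y = V"
  proof -
    have "card (X \<union> Y) = card X + card Y" using disj finX finY by (simp add: card_Un_disjoint)
    hence "card V \<le> card (X \<union> Y)" using cX cY half by simp
    thus ?thesis using X Y finV by (metis Un_least card_seteq)
  qed
  have XX: "\<forall>a\<in>X. \<forall>b\<in>X. {a,b} \<notin> E"
  proof (intro ballI notI)
    fix a b assume "a \<in> X" "b \<in> X" "{a,b} \<in> E"
    hence "b \<in> Y" using nY[of a] X unfolding nbr_def by auto
    thus False using disj \<open>b \<in> X\<close> by auto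
  qed
  have XYe: "\<forall>a\<in>X. \<forall>b\<in>Y. {a,b} \<in> E" using nY unfolding nbr_def by auto
  have VX: "V - X = Y" using disj un by auto
  have YY: "\<forall>b\<in>Y. card {c\<in>Y. {b,c}\<in>E} = 1"
  proof
    fix b assume b: "b \<in> Y"
    have eq: "{c\<in>Y. {b,c}\<in>E} = nbr V E b \<inter> Y" using Y unfolding nbr_def by auto
    have ge: "\<forall>c\<in>Y. 1 \<le> card (nbr V E c \<inter> Y)"
    proof
      fix c assume c: "c \<in> Y"
      have "nbr V E c \<subseteq> (nbr V E c \<inter> Y) \<union> X" using un unfolding nbr_def by auto
      hence "card (nbr V E c) \<le> card ((nbr V E c \<inter> Y) \<union> X)"
        using finX finY by (intro card_mono) auto
      also have "\<dots> \<le> card (nbr V E c \<inter> Y) + card X" by (rule card_Un_le)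
      finally show "1 \<le> card (nbr V E c \<inter> Y)" using deg c Y cX by fastforce
    qed
    have sum: "(\<Sum>c\<in>Y. card (nbr V E c \<inter> Y)) = card Y"
      using e2 ecnt_sum[OF finV, of E Y "V - X"] ecnt_swap[of V E "V-X" Y] VX Y
      by (simp add: Int_absorb1)
    show "card {c\<in>Y. {b,c}\<in>E} = 1"
    proof (rule ccontr)
      assume "card {c\<in>Y. {b,c}\<in>E} \<noteq> 1"
      hence "1 < card (nbr V E b \<inter> Y)" using ge b eq by fastforce
      hence "(\<Sum>c\<in>Y. (1::nat)) < (\<Sum>c\<in>Y. card (nbr V E c \<inter> Y))"
        using ge b finY by (intro sum_strict_mono_ex1) auto
      thus False using sum by simp
    qed
  qed
  show ?thesis using join_iso[OF gr disj un XX XYe YY] cX cY by simp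
qed

lemma K3:
  assumes "d = 2" and "V \<noteq> {}"
  shows "\<exists>l\<ge>1. graph_iso V E (join_V l) (join_E l)"
proof -
  have n3: "card V = 3" using dn[OF assms(2)] half assms(1) by simp
  obtain c where c: "c \<in> V" using assms(2) by blast
  have nb: "nbr V E a = V - {a}" if a: "a \<in> V" for a
  proof -
    have "card (V - {a}) = 2" using n3 a finV by (simp add: card_Diff_singleton)
    thus ?thesis using nbr_sub[OF gr, of a] deg a assms(1) finV by (metis card_seteq finite_Diff)
  qed
  hence ed: "\<And>a b. a \<in> V \<Longrightarrow> b \<in> V \<Longrightarrow> a \<noteq> b \<Longrightarrow> {a,b} \<in> E" unfolding nbr_def by auto
  have YY: "\<forall>b\<in>V - {c}. card {c'\<in>V - {c}. {b,c'}\<in>E} = 1"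
  proof
    fix b assume b: "b \<in> V - {c}"
    have "{c'\<in>V - {c}. {b,c'}\<in>E} = V - {c} - {b}" using ed b graph_noloop[OF gr] by auto
    thus "card {c'\<in>V - {c}. {b,c'}\<in>E} = 1" using b c n3 finV by (simp add: card_Diff_singleton)
  qed
  have cc: "card {c} + 1 = card (V - {c})" using c n3 finV by (simp add: card_Diff_singleton)
  show ?thesis
    using join_iso[OF gr _ _ _ _ YY cc] c ed graph_noloop[OF gr] by auto
qed

theorem C_main:
  assumes X: "X \<subseteq> V" "X \<noteq> {}" "X \<noteq> V" and Y: "Y \<subseteq> V"
  shows "d \<le> fcut V E X Y"
    and "fcut V E X Y = d \<Longrightarrow> Y \<noteq> {} \<Longrightarrow> Y \<noteq> V \<Longrightarrow> \<exists>l\<ge>1. graph_iso V E (join_V l) (join_E l)"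
    and "fcut V E X Y = d \<Longrightarrow> Y = {} \<Longrightarrow> card X = 1"
    and "fcut V E X Y = d \<Longrightarrow> Y = V \<Longrightarrow> card (V - X) = 1"
proof -
  have Vne: "V \<noteq> {}" using X by auto
  have finX: "finite X" "finite Y" using X Y finV by (auto intro: finite_subset)
  have x1: "1 \<le> card X" using X finX by (simp add: Suc_le_eq card_gt_0_iff)
  have x2: "card X + 1 \<le> card V" using X finV by (metis Suc_eq_plus1 Suc_leI psubsetI psubset_card_mono)
  have k: "card Y \<le> card V" using Y finV by (simp add: card_mono)
  note ar = arith_ge[OF half dn[OF Vne] x1 x2 k bounds[OF X(1) Y]]
  note fs = fcut_split[OF finV, of E X Y]
  show "d \<le> fcut V E X Y" using ar(1) fs by simp
  show "fcut V E X Y = d \<Longrightarrow> Y = {} \<Longrightarrow> card X = 1" using ar(3) fs by simp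
  show "fcut V E X Y = d \<Longrightarrow> Y = V \<Longrightarrow> card (V - X) = 1"
    using ar(4) fs X finX by (simp add: card_Diff_subset)
  assume eq: "fcut V E X Y = d" and Yne: "Y \<noteq> {}" "Y \<noteq> V"
  have k1: "1 \<le> card Y" using Yne finX by (simp add: Suc_le_eq card_gt_0_iff)
  have k2: "card Y + 1 \<le> card V" using Y Yne finV by (metis Suc_eq_plus1 Suc_leI psubsetI psubset_card_mono)
  have cs: "card (V - X) = card V - card X" "card (V - Y) = card V - card Y"
    using X Y finV finX by (auto simp: card_Diff_subset)
  from ar(2)[OF _ k1 k2] eq fs
  consider "d = 2" | "card Y = d \<and> card X + 1 = d \<and> ecnt V E X (V-Y) = 0 \<and> ecnt V E (V-X) Y = card Y"
    | "card V - card Y = d \<and> card V - card X + 1 = d \<and> ecnt V E (V-X) Y = 0 \<and> ecnt V E X (V-Y) = card V - card Y"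
    by auto
  thus "\<exists>l\<ge>1. graph_iso V E (join_V l) (join_E l)"
  proof cases
    case 1 thus ?thesis using K3 Vne by blast
  next
    case 2 thus ?thesis using struct_join[OF X(1) Y] by blast
  next
    case 3
    have "V - (V - X) = X" "V - (V - Y) = Y" using X Y by auto
    thus ?thesis using struct_join[of "V - X" "V - Y"] 3 cs by auto
  qed
qed

end


lemma min_deg_le: "finite V \<Longrightarrow> a \<in> V \<Longrightarrow> min_degree V E \<le> degree V E a"
  unfolding min_degree_def by (intro Min_le) auto

lemma dprod_E_mem: "e \<in> dprod_E EG EH \<longleftrightarrow> (\<exists>x y u v. e = {(x,u),(y,v)} \<and> {x,y}\<in>EG \<and> {u,v}\<in>EH)"
  unfolding dprod_E_def by simp

lemma dprod_fin:
  assumes "graph VG EG" "graph VH EH"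
  shows "finite (dprod_E EG EH)"
proof -
  have "dprod_E EG EH \<subseteq> Pow (VG \<times> VH)"
  proof
    fix e assume "e \<in> dprod_E EG EH"
    then obtain x y u v where e: "e = {(x,u),(y,v)}" "{x,y}\<in>EG" "{u,v}\<in>EH" unfolding dprod_E_mem by blast
    show "e \<in> Pow (VG \<times> VH)" using graph_edge[OF assms(1) e(2)] graph_edge[OF assms(2) e(3)] e(1) by auto
  qed
  moreover have "finite VG" "finite VH" using assms unfolding graph_def by auto
  ultimately show ?thesis by (meson finite_Pow_iff finite_SigmaI finite_subset)
qed

lemma has_nbr:
  assumes "graph VG EG" "connected VG EG" "card VG \<ge> 2" "x \<in> VG"
  shows "\<exists>y\<in>VG. {y,x} \<in> EG"
proof -
  have "VG - {x} \<noteq> {}"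
  proof
    assume "VG - {x} = {}" hence "VG \<subseteq> {x}" by auto
    hence "card VG \<le> card {x}" by (intro card_mono) auto
    thus False using assms(3) by simp
  qed
  then obtain w where w: "w \<in> VG" "w \<noteq> x" by blast
  hence "reachable EG x w" using assms(2,4) unfolding connected_def by blast
  hence "\<exists>y. {x,y} \<in> EG" using w(2) unfolding reachable_def
    by (induction rule: converse_rtranclp_induct) auto
  then obtain y where "{x,y} \<in> EG" by blast
  thus ?thesis using graph_edge[OF assms(1)] by (metis insert_commute)
qed

lemma core:
  fixes VG :: "'a set" and EG :: "'a set set" and VH :: "'b set" and EH :: "'b set set"
    and S :: "('a \<times> 'b) set set"
  assumes gG: "graph VG EG" and gH: "graph VH EH"
    and cG: "connected VG EG" and c2: "card VG \<ge> 2"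
    and half: "card VH < 2 * min_degree VH EH"
    and SE: "S \<subseteq> dprod_E EG EH"
    and xuv: "x \<in> VG" "u \<in> VH" "v \<in> VH"
    and nr: "\<not> reachable (dprod_E EG EH - S) (x, u) (x, v)"
  shows "min_degree VG EG * min_degree VH EH \<le> card S"
    and "card S = min_degree VG EG * min_degree VH EH \<Longrightarrow>
        (graph_iso VG EG K2_V K2_E \<and> (\<exists>l::nat. l \<ge> 1 \<and> graph_iso VH EH (join_V l) (join_E l)))
        \<or> (\<exists>w\<in>dprod_V VG VH. S = incident_edges (dprod_E EG EH) w)"
proof -
  define dG where "dG = min_degree VG EG"
  define dH where "dH = min_degree VH EH"
  have finG: "finite VG" and finH: "finite VH" using gG gH unfolding graph_def by auto
  have degH: "\<forall>a\<in>VH. dH \<le> card (nbr VH EH a)"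
    using min_deg_le[OF finH] degree_nbr unfolding dH_def by metis
  interpret H: hg VH EH dH using gH degH half unfolding dH_def by unfold_locales auto
  have dH1: "1 \<le> dH" using half xuv unfolding dH_def by (cases "min_degree VH EH") auto
  have finS: "finite S" using SE dprod_fin[OF gG gH] by (rule finite_subset)
  define E' where "E' = dprod_E EG EH - S"
  define A where "A = {p. reachable E' (x,u) p}"
  have cross: "{p,q} \<in> S" if pq: "{p,q} \<in> dprod_E EG EH" "(p \<in> A) \<noteq> (q \<in> A)" for p q
  proof (rule ccontr)
    assume nS: "{p,q} \<notin> S"
    hence e: "{p,q} \<in> E'" "{q,p} \<in> E'" using pq unfolding E'_def by (auto simp: insert_commute)
    show False
    proof (cases "p \<in> A")
      case True
      hence "reachable E' (x,u) q" using e(1) unfolding A_def reachable_def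
        by (auto intro: rtranclp.rtrancl_into_rtrancl)
      thus False using True pq(2) unfolding A_def by auto
    next
      case False
      hence "q \<in> A" using pq(2) by auto
      hence "reachable E' (x,u) p" using e(2) unfolding A_def reachable_def
        by (auto intro: rtranclp.rtrancl_into_rtrancl)
      thus False using False unfolding A_def by auto
    qed
  qed
  define X where "X = {a\<in>VH. (x,a) \<in> A}"
  define Ay where "Ay y = {b\<in>VH. (y,b) \<in> A}" for y
  define N where "N = {y\<in>VG. {y,x} \<in> EG}"
  define P where "P y = {(a,b)\<in>VH\<times>VH. {a,b}\<in>EH \<and> (a\<in>X) \<noteq> (b\<in>Ay y)}" for y
  define D where "D = Sigma N P"
  define \<phi> where "\<phi> = (\<lambda>(y::'a,(a::'b,b::'b)). {(x,a),(y,b)})"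
  have degx: "card N = degree VG EG x" unfolding N_def degree_def ..
  have finN: "finite N" unfolding N_def using finG by simp
  have Nx: "y \<noteq> x" if "y \<in> N" for y using that graph_noloop[OF gG] unfolding N_def by auto
  have uX: "u \<in> X" using xuv unfolding X_def A_def reachable_def by auto
  have vX: "v \<notin> X" using nr unfolding X_def A_def E'_def by auto
  have XH: "X \<subseteq> VH" "X \<noteq> {}" "X \<noteq> VH" using uX vX xuv unfolding X_def by auto
  have AyH: "Ay y \<subseteq> VH" for y unfolding Ay_def by auto
  have cardP: "card (P y) = fcut VH EH X (Ay y)" for y unfolding P_def fcut_def ..
  have injphi: "inj_on \<phi> D"
  proof (rule inj_onI)
    fix p q assume p: "p \<in> D" and q: "q \<in> D" and eq: "\<phi> p = \<phi> q"
    obtain y a b where p': "p = (y,(a,b))" by (cases p) auto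
    obtain y' a' b' where q': "q = (y',(a',b'))" by (cases q) auto
    have "y \<noteq> x" "y' \<noteq> x" using p q Nx unfolding p' q' D_def by auto
    thus "p = q" using eq unfolding p' q' \<phi>_def by (auto simp: doubleton_eq_iff)
  qed
  have phiS: "\<phi> ` D \<subseteq> S"
  proof
    fix e assume "e \<in> \<phi> ` D"
    then obtain y a b where yab: "y \<in> N" "(a,b) \<in> P y" "e = {(x,a),(y,b)}"
      unfolding D_def \<phi>_def by auto
    have "e \<in> dprod_E EG EH" using yab unfolding N_def P_def dprod_E_mem
      by (auto simp: insert_commute)
    moreover have "((x,a) \<in> A) \<noteq> ((y,b) \<in> A)" using yab(2) unfolding P_def X_def Ay_def by auto
    ultimately show "e \<in> S" using cross yab(3) by auto
  qed
  have finP: "finite (P y)" for y unfolding P_def using finH by (auto intro: finite_subset)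
  have cardD: "card D = (\<Sum>y\<in>N. fcut VH EH X (Ay y))"
    unfolding D_def using finN finP cardP by simp
  have each: "dH \<le> fcut VH EH X (Ay y)" for y using H.C_main(1)[OF XH AyH] .
  have DS: "card D \<le> card S" using card_image[OF injphi] card_mono[OF finS phiS] by simp
  have lb: "card N * dH \<le> card D"
  proof -
    have "(\<Sum>y\<in>N. dH) \<le> (\<Sum>y\<in>N. fcut VH EH X (Ay y))" using each by (intro sum_mono) auto
    thus ?thesis using cardD by simp
  qed
  have dGN: "dG \<le> card N" using degx min_deg_le[OF finG xuv(1)] unfolding dG_def by simp
  have "dG * dH \<le> card N * dH" using dGN by simp
  thus "min_degree VG EG * min_degree VH EH \<le> card S" using lb DS unfolding dG_def dH_def by linarith
  assume eqS: "card S = min_degree VG EG * min_degree VH EH"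
  hence eqS': "card S = dG * dH" unfolding dG_def dH_def .
  have cN: "card N = dG"
  proof -
    have "card N * dH \<le> dG * dH" using lb DS eqS' by linarith
    hence "card N \<le> dG" using dH1 by simp
    thus ?thesis using dGN by simp
  qed
  have cDS: "card D = card S" using lb DS eqS' cN by simp
  have phiD: "\<phi> ` D = S" using card_subset_eq[OF finS phiS] card_image[OF injphi] cDS by simp
  have eachq: "fcut VH EH X (Ay y) = dH" if y: "y \<in> N" for y
  proof (rule ccontr)
    assume "fcut VH EH X (Ay y) \<noteq> dH"
    hence "dH < fcut VH EH X (Ay y)" using each[of y] by simp
    hence "(\<Sum>y\<in>N. dH) < (\<Sum>y\<in>N. fcut VH EH X (Ay y))"
      using each y finN by (intro sum_strict_mono_ex1) auto
    thus False using cardD cDS eqS' cN by (simp add: mult.commute)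
  qed
  have Sform: "\<exists>y a b. y \<in> N \<and> (a,b) \<in> P y \<and> e = {(x,a),(y,b)}" if "e \<in> S" for e
    using that phiD unfolding D_def \<phi>_def by auto
  show "(graph_iso VG EG K2_V K2_E \<and> (\<exists>l::nat. l \<ge> 1 \<and> graph_iso VH EH (join_V l) (join_E l)))
        \<or> (\<exists>w\<in>dprod_V VG VH. S = incident_edges (dprod_E EG EH) w)"
  proof (cases "\<exists>y\<in>N. Ay y \<noteq> {} \<and> Ay y \<noteq> VH")
    case True
    then obtain y where y: "y \<in> N" "Ay y \<noteq> {}" "Ay y \<noteq> VH" by blast
    have Hiso: "\<exists>l\<ge>1. graph_iso VH EH (join_V l) (join_E l)"
      using H.C_main(2)[OF XH AyH eachq[OF y(1)] y(2,3)] .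
    have yG: "y \<in> VG" "{y,x} \<in> EG" "y \<noteq> x" using y(1) Nx unfolding N_def by auto
    have Ny: "z = x" if z: "z \<in> VG" "{z,y} \<in> EG" for z
    proof (rule ccontr)
      assume zx: "z \<noteq> x"
      have "dH \<le> fcut VH EH (Ay y) (Ay z)"
        using H.C_main(1)[OF AyH y(2,3) AyH] .
      hence "card {(a,b)\<in>VH\<times>VH. {a,b}\<in>EH \<and> (a\<in>Ay y) \<noteq> (b\<in>Ay z)} \<noteq> 0"
        using dH1 unfolding fcut_def by linarith
      hence "{(a,b)\<in>VH\<times>VH. {a,b}\<in>EH \<and> (a\<in>Ay y) \<noteq> (b\<in>Ay z)} \<noteq> {}" by (metis card.empty)
      then obtain a b where ab: "a \<in> VH" "b \<in> VH" "{a,b}\<in>EH" "(a\<in>Ay y) \<noteq> (b\<in>Ay z)"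
        by blast
      have "{(y,a),(z,b)} \<in> dprod_E EG EH" using ab z unfolding dprod_E_mem
        by (auto simp: insert_commute)
      moreover have "((y,a) \<in> A) \<noteq> ((z,b) \<in> A)" using ab unfolding Ay_def by auto
      ultimately have "{(y,a),(z,b)} \<in> S" using cross by blast
      then obtain y' a' b' where "{(y,a),(z,b)} = {(x,a'),(y',b')}" using Sform by blast
      thus False using zx yG(3) by (auto simp: doubleton_eq_iff)
    qed
    have "{z\<in>VG. {z,y} \<in> EG} = {x}"
    proof
      show "{z\<in>VG. {z,y} \<in> EG} \<subseteq> {x}" using Ny by blast
      show "{x} \<subseteq> {z\<in>VG. {z,y} \<in> EG}" using xuv yG by (simp add: insert_commute)
    qed
    hence "degree VG EG y = 1" unfolding degree_def by simp
    hence "dG \<le> 1" using min_deg_le[OF finG yG(1), of EG] unfolding dG_def by simp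
    hence "card N \<le> 1" using cN by simp
    hence "\<forall>a\<in>N. \<forall>b\<in>N. a = b" using finN by (simp add: card_le_Suc0_iff_eq)
    hence Nx1: "N = {y}" using y(1) by blast
    have VGxy: "VG = {x,y}"
    proof
      show "{x,y} \<subseteq> VG" using xuv yG by auto
      show "VG \<subseteq> {x,y}"
      proof
        fix w assume w: "w \<in> VG"
        hence "reachable EG x w" using cG xuv unfolding connected_def by blast
        thus "w \<in> {x,y}" unfolding reachable_def
        proof (induction rule: rtranclp_induct)
          case base thus ?case by simp
        next
          case (step w w')
          have w'G: "w' \<in> VG" using graph_edge[OF gG step(2)] by simp
          show ?case
          proof (cases "w = x")
            case True
            hence "w' \<in> N" using step(2) w'G unfolding N_def by (simp add: insert_commute)
            thus ?thesis using Nx1 by simp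
          next
            case False
            hence "w = y" using step(3) by simp
            thus ?thesis using Ny[OF w'G] step(2) by (simp add: insert_commute)
          qed
        qed
      qed
    qed
    have Giso: "graph_iso VG EG K2_V K2_E"
      unfolding graph_iso_def
    proof (intro exI[of _ "\<lambda>w. if w = x then 0 else 1"] conjI)
      show "bij_betw (\<lambda>w. if w = x then 0 else (1::nat)) VG K2_V"
        unfolding VGxy K2_V_def bij_betw_def using yG(3) by (auto simp: inj_on_def)
      show "\<forall>u\<in>VG. \<forall>v\<in>VG. ({u, v} \<in> EG) = ({if u = x then 0 else 1, if v = x then 0 else (1::nat)} \<in> K2_E)"
        unfolding VGxy K2_E_def using yG graph_noloop[OF gG] by (auto simp: insert_commute doubleton_eq_iff)
    qed
    show ?thesis using Giso Hiso by blast
  next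
    case False
    hence triv: "\<forall>y\<in>N. Ay y = {} \<or> Ay y = VH" by blast
    obtain y0 where y0: "y0 \<in> N" using has_nbr[OF gG cG c2 xuv(1)] unfolding N_def by blast
    have "dH + 1 \<le> card VH" using H.dn xuv by blast
    hence n3: "3 \<le> card VH" using half unfolding dH_def by linarith
    have ex: "\<exists>a\<in>VH. \<exists>\<beta>. (\<forall>y\<in>N. \<forall>b\<in>VH. ((y,b)\<in>A) = \<beta>) \<and> (\<forall>a'\<in>VH. ((a'\<in>X) \<noteq> \<beta>) = (a' = a))"
    proof (cases "Ay y0 = {}")
      case True
      have "card X = 1" using H.C_main(3)[OF XH AyH eachq[OF y0] True] .
      then obtain a where a: "X = {a}" by (auto simp: card_Suc_eq)
      have allE: "Ay y = {}" if y: "y \<in> N" for y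
      proof (rule ccontr)
        assume "Ay y \<noteq> {}" hence "Ay y = VH" using triv y by blast
        hence "card (VH - X) = 1" using H.C_main(4)[OF XH AyH eachq[OF y]] by simp
        thus False using a n3 xuv XH finH by (simp add: card_Diff_subset)
      qed
      show ?thesis using a XH allE unfolding Ay_def
        by (intro bexI[of _ a] exI[of _ False]) auto
    next
      case False
      hence V0: "Ay y0 = VH" using triv y0 by blast
      have "card (VH - X) = 1" using H.C_main(4)[OF XH AyH eachq[OF y0] V0] .
      then obtain a where a: "VH - X = {a}" by (auto simp: card_Suc_eq)
      have allV: "Ay y = VH" if y: "y \<in> N" for y
      proof (rule ccontr)
        assume "Ay y \<noteq> VH" hence "Ay y = {}" using triv y by blast
        hence "card X = 1" using H.C_main(3)[OF XH AyH eachq[OF y]] by simp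
        moreover have "card (VH - X) = card VH - card X" using XH finH by (intro card_Diff_subset) (auto intro: finite_subset)
        moreover have "card X \<le> card VH" using XH finH by (intro card_mono) auto
        ultimately show False using a n3 by simp
      qed
      show ?thesis using a XH allV unfolding Ay_def
        by (intro bexI[of _ a] exI[of _ True]) auto
    qed
    then obtain a \<beta> where a: "a \<in> VH" and beta: "\<forall>y\<in>N. \<forall>b\<in>VH. ((y,b)\<in>A) = \<beta>"
      and aX: "\<forall>a'\<in>VH. ((a'\<in>X) \<noteq> \<beta>) = (a' = a)" by blast
    have "S = incident_edges (dprod_E EG EH) (x,a)"
    proof
      show "S \<subseteq> incident_edges (dprod_E EG EH) (x,a)"
      proof
        fix e assume e: "e \<in> S"
        then obtain y a' b where yab: "y \<in> N" "(a',b) \<in> P y" "e = {(x,a'),(y,b)}" using Sform by blast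
        have "a' = a" using yab(1,2) beta aX unfolding P_def Ay_def by auto
        thus "e \<in> incident_edges (dprod_E EG EH) (x,a)" using e SE yab(3) unfolding incident_edges_def by auto
      qed
      show "incident_edges (dprod_E EG EH) (x,a) \<subseteq> S"
      proof
        fix e assume e: "e \<in> incident_edges (dprod_E EG EH) (x,a)"
        hence ed: "e \<in> dprod_E EG EH" and xa: "(x,a) \<in> e" unfolding incident_edges_def by auto
        then obtain x1 y1 u1 v1 where e1: "e = {(x1,u1),(y1,v1)}" "{x1,y1}\<in>EG" "{u1,v1}\<in>EH"
          unfolding dprod_E_mem by blast
        obtain y' b' where yb: "e = {(x,a),(y',b')}" "{x,y'} \<in> EG" "{a,b'} \<in> EH"
          using xa e1 by (auto simp: insert_commute)
        have "y' \<in> N" "b' \<in> VH" using graph_edge[OF gG yb(2)] graph_edge[OF gH yb(3)] yb(2)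
          unfolding N_def by (auto simp: insert_commute)
        hence "((x,a) \<in> A) \<noteq> ((y',b') \<in> A)" using beta aX a unfolding X_def by auto
        thus "e \<in> S" using cross ed yb(1) by blast
      qed
    qed
    moreover have "(x,a) \<in> dprod_V VG VH" using xuv a unfolding dprod_V_def by auto
    ultimately show ?thesis by blast
  qed
qed


theorem lemma2:
  fixes VG :: "'a set" and EG :: "'a set set" and VH :: "'b set" and EH :: "'b set set"
    and S :: "('a \<times> 'b) set set"
  assumes "graph VG EG" and "graph VH EH"
    and "connected VG EG" and "connected VH EH"
    and "card VG \<ge> 2" and "card VH \<ge> 2"
    and "real (min_degree VH EH) > real (card VH) / 2"
    and "S \<subseteq> dprod_E EG EH"
  shows "(card S < min_degree VG EG * min_degree VH EH \<longrightarrow>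
           (\<forall>x\<in>VG. \<forall>u\<in>VH. \<forall>v\<in>VH. reachable (dprod_E EG EH - S) (x, u) (x, v)))
       \<and> ((\<not> (graph_iso VG EG K2_V K2_E \<and>
                (\<exists>l::nat. l \<ge> 1 \<and> graph_iso VH EH (join_V l) (join_E l))))
          \<and> card S = min_degree VG EG * min_degree VH EH
          \<and> (\<forall>w\<in>dprod_V VG VH. S \<noteq> incident_edges (dprod_E EG EH) w)
          \<longrightarrow> (\<forall>x\<in>VG. \<forall>u\<in>VH. \<forall>v\<in>VH. reachable (dprod_E EG EH - S) (x, u) (x, v)))"
proof -
  have "real (card VH) < real (2 * min_degree VH EH)" using assms(7) by simp
  hence half: "card VH < 2 * min_degree VH EH" by (simp only: of_nat_less_iff)
  note co = core[OF assms(1,2,3,5) half assms(8)]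
  show ?thesis
  proof (intro conjI impI ballI)
    fix x u v assume lt: "card S < min_degree VG EG * min_degree VH EH"
      and xuv: "x \<in> VG" "u \<in> VH" "v \<in> VH"
    show "reachable (dprod_E EG EH - S) (x, u) (x, v)"
      using co(1)[OF xuv] lt by (meson not_le)
  next
    fix x u v assume h: "(\<not> (graph_iso VG EG K2_V K2_E \<and>
                (\<exists>l::nat. l \<ge> 1 \<and> graph_iso VH EH (join_V l) (join_E l))))
          \<and> card S = min_degree VG EG * min_degree VH EH
          \<and> (\<forall>w\<in>dprod_V VG VH. S \<noteq> incident_edges (dprod_E EG EH) w)"
      and xuv: "x \<in> VG" "u \<in> VH" "v \<in> VH"
    show "reachable (dprod_E EG EH - S) (x, u) (x, v)"
      using co(2)[OF xuv] h by blast
  qed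
qed

end
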